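(* Let $R$ be a UFD of characteristic $p>0$, $R[x,y]$ the polynomial ring in two variables, $0\ne a\in R$, $0\ne\theta(y)=\sum_{i\ge1}s_iy^i\in yR[y]$, $f:=ax+\theta(y)$, and $0\ne F\in R[f]$. Let $\phi\in\operatorname{Aut}_RR[x,y]$ be given by $\phi(y)=y+aF$ and $\phi(x)=x+a^{-1}(\theta(y)-\theta(y+aF))$. Let $d:=\gcd(a,\theta'(y))\in R$, $b:=a/d$, $\theta^*(y):=\sum_{i\ge1}s_{pi}y^i$, $q:=y^p-(aF)^{p-1}y$ and $q_1:=d^{-1}(f-\theta^*(q))$. Then $R[x,y]^{\phi}=R_b[q_1,q]\cap R[x,y]$, where $R_b:=R[b^{-1}]$ and the intersection is taken in $R_a[x,y]$.
   Context: $\theta'(y)$ is the formal derivative; $d$ is a greatest common divisor in $R[y]$ of $a$ and $\theta'(y)$, which may be taken in $R$ (if $\theta'(y)=0$, $d=a$). $R[x,y]^{\phi}:=\{u\mid\phi(u)=u\}$. $R_a:=R[a^{-1}]$. The element $q_1$ lies in $R[x,y]$ and in $R[x,y]^{\phi}$. *)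

theory Defs
  imports "HOL-Computational_Algebra.Polynomial" "HOL-Computational_Algebra.Fraction_Field"
    "HOL-Computational_Algebra.Polynomial_Factorial"
begin

text \<open>Bivariate polynomials over a ring A are represented as A poly poly:
  the outer variable is y, the inner variable (in the coefficients) is x.\<close>

definition C2 :: "'a::comm_ring_1 \<Rightarrow> 'a poly poly" where
  "C2 c = [:[:c:]:]"

definition Xv :: "'a::comm_ring_1 poly poly" where
  "Xv = [:[:0, 1:]:]"

definition Yv :: "'a::comm_ring_1 poly poly" where
  "Yv = [:0, 1:]"

definition subst2 :: "'a::comm_ring_1 poly poly \<Rightarrow> 'a poly poly \<Rightarrow> 'a poly poly \<Rightarrow> 'a poly poly" where
  "subst2 P U V = poly (map_poly (\<lambda>c. poly (map_poly C2 c) U) P) V"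

definition eval1 :: "'a::comm_ring_1 poly \<Rightarrow> 'a poly poly \<Rightarrow> 'a poly poly" where
  "eval1 g U = poly (map_poly C2 g) U"

definition emb2 :: "'a::idom poly poly \<Rightarrow> 'a fract poly poly" where
  "emb2 u = map_poly (map_poly to_fract) u"

definition Rxy :: "'a::idom fract poly poly set" where
  "Rxy = range emb2"

definition Rloc :: "'a::idom \<Rightarrow> 'a fract set" where
  "Rloc b = {to_fract r / to_fract b ^ n | r n. True}"

definition theta_star :: "nat \<Rightarrow> 'a::comm_ring_1 poly \<Rightarrow> 'a poly" where
  "theta_star p \<theta> = (\<Sum>i\<in>{1..degree \<theta>}. monom (coeff \<theta> (p * i)) i)"

end

theory Submission
  imports Defs "HOL-Computational_Algebra.Primes"
begin

definition rh :: "('a::comm_ring_1 \<Rightarrow> 'b::comm_ring_1) \<Rightarrow> bool" where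
  "rh h \<longleftrightarrow> h 1 = 1 \<and> (\<forall>x y. h (x + y) = h x + h y) \<and> (\<forall>x y. h (x * y) = h x * h y)"

lemma rh_1: "rh h \<Longrightarrow> h 1 = 1" by (simp add: rh_def)
lemma rh_add: "rh h \<Longrightarrow> h (x + y) = h x + h y" by (simp add: rh_def)
lemma rh_mult: "rh h \<Longrightarrow> h (x * y) = h x * h y" by (simp add: rh_def)
lemma rh_0: "rh h \<Longrightarrow> h 0 = 0"
  using rh_add[of h 0 0] by simp
lemma rh_uminus: "rh h \<Longrightarrow> h (- x) = - h x"
  using rh_add[of h x "-x"] rh_0[of h] by (simp add: eq_neg_iff_add_eq_0 add.commute)
lemma rh_diff: "rh h \<Longrightarrow> h (x - y) = h x - h y"
  using rh_add[of h x "-y"] rh_uminus[of h y] by simp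
lemma rh_power: "rh h \<Longrightarrow> h (x ^ n) = h x ^ n"
  by (induct n) (simp_all add: rh_1 rh_mult)
lemma rh_sum: "rh h \<Longrightarrow> h (sum f A) = (\<Sum>i\<in>A. h (f i))"
  by (induct A rule: infinite_finite_induct) (simp_all add: rh_0 rh_add)
lemma rh_of_nat: "rh h \<Longrightarrow> h (of_nat n) = of_nat n"
  by (induct n) (simp_all add: rh_0 rh_1 rh_add)

lemma rh_comp: "rh g \<Longrightarrow> rh h \<Longrightarrow> rh (\<lambda>x. g (h x))"
  by (simp add: rh_def)

lemma rh_id: "rh (\<lambda>x. x)" by (simp add: rh_def)

lemma rh_map_poly: assumes "rh h" shows "rh (map_poly h)"
proof -
  have h0: "h 0 = 0" using assms by (rule rh_0)
  have a: "map_poly h (p + q) = map_poly h p + map_poly h q" for p q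
    by (rule poly_eqI) (simp add: coeff_map_poly h0 rh_add[OF assms])
  have m: "map_poly h (p * q) = map_poly h p * map_poly h q" for p q
    by (rule poly_eqI) (simp add: coeff_map_poly h0 coeff_mult rh_sum[OF assms] rh_mult[OF assms])
  show ?thesis unfolding rh_def using a m by (simp add: rh_1[OF assms])
qed

lemma rh_poly: "rh (\<lambda>p. poly p v)"
  by (simp add: rh_def)

lemma rh_const: "rh (\<lambda>c::'a::comm_ring_1. [:c:])"
  by (simp add: rh_def)

lemma rh_C2: "rh C2"
  unfolding C2_def by (simp add: rh_def pCons_one)

lemma rh_eval: "rh h \<Longrightarrow> rh (\<lambda>p. poly (map_poly h p) v)"
  by (rule rh_comp[OF rh_poly rh_map_poly])

lemma rh_subst2: "rh (\<lambda>W. subst2 W U V)"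
  unfolding subst2_def
  by (rule rh_eval, rule rh_eval, rule rh_C2)

lemma rh_eval1: "rh (\<lambda>g. eval1 g U)"
  unfolding eval1_def by (rule rh_eval, rule rh_C2)

lemma rh_emb2: "rh emb2"
proof -
  have "emb2 = map_poly (map_poly to_fract)" by (simp add: fun_eq_iff emb2_def)
  moreover have "rh (to_fract :: 'a::idom \<Rightarrow> _)" by (simp add: rh_def)
  ultimately show ?thesis using rh_map_poly by metis
qed

lemma const_pCons_split: "[:pCons r c:] = C2 r + Xv * [:c:]"
  unfolding C2_def Xv_def by simp

lemma pCons_split: "pCons c W = [:c:] + Yv * W"
  unfolding Yv_def by simp

lemma biv_induct_in:
  fixes Pr :: "'a::comm_ring_1 poly poly \<Rightarrow> bool"
  assumes W: "\<forall>i j. coeff (coeff W i) j \<in> S"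
    and C: "\<And>c. c \<in> S \<Longrightarrow> Pr (C2 c)" and X: "Pr Xv" and Y: "Pr Yv"
    and A: "\<And>A B. Pr A \<Longrightarrow> Pr B \<Longrightarrow> Pr (A + B)"
    and M: "\<And>A B. Pr A \<Longrightarrow> Pr B \<Longrightarrow> Pr (A * B)"
    and S0: "0 \<in> S"
  shows "Pr W"
proof -
  have cst: "Pr [:c:]" if "\<forall>j. coeff c j \<in> S" for c using that
  proof (induct c)
    case 0 then show ?case using C[of 0] S0 by (simp add: C2_def)
  next
    case (pCons r c)
    have r: "r \<in> S" using pCons(3)[rule_format, of 0] by simp
    have "\<forall>j. coeff c j \<in> S" using pCons(3)[rule_format, of "Suc j" for j] by simp
    then have "Pr [:c:]" by (rule pCons(2))
    then show ?case using const_pCons_split[of r c] C[OF r] X A M by metis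
  qed
  show ?thesis using W
  proof (induct W)
    case 0 then show ?case using C[of 0] S0 by (simp add: C2_def)
  next
    case (pCons c W)
    have c: "\<forall>j. coeff c j \<in> S" using pCons(3)[rule_format, of 0] by simp
    have "\<forall>i j. coeff (coeff W i) j \<in> S" using pCons(3)[rule_format, of "Suc i" for i] by simp
    then have "Pr W" by (rule pCons(2))
    then show ?case using pCons_split[of c W] cst[OF c] Y A M by metis
  qed
qed

lemma biv_induct:
  fixes Pr :: "'a::comm_ring_1 poly poly \<Rightarrow> bool"
  assumes C: "\<And>c. Pr (C2 c)" and X: "Pr Xv" and Y: "Pr Yv"
    and A: "\<And>A B. Pr A \<Longrightarrow> Pr B \<Longrightarrow> Pr (A + B)"
    and M: "\<And>A B. Pr A \<Longrightarrow> Pr B \<Longrightarrow> Pr (A * B)"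
  shows "Pr W"
  by (rule biv_induct_in[where S=UNIV]) (use assms in auto)

lemma rh_unique:
  fixes H1 H2 :: "'a::comm_ring_1 poly poly \<Rightarrow> 'b::comm_ring_1"
  assumes "rh H1" "rh H2" "\<And>c. H1 (C2 c) = H2 (C2 c)" "H1 Xv = H2 Xv" "H1 Yv = H2 Yv"
  shows "H1 W = H2 W"
  by (rule biv_induct[of "\<lambda>W. H1 W = H2 W"]) (simp_all add: assms rh_add rh_mult)

lemma map_poly_const[simp]: "f 0 = 0 \<Longrightarrow> map_poly f [:c:] = [:f c:]"
  by (simp add: map_poly_pCons)
lemma C2_0[simp]: "C2 0 = 0" by (simp add: C2_def)
lemma subst2_C2[simp]: "subst2 (C2 c) U V = C2 c"
  unfolding subst2_def C2_def by simp
lemma subst2_Xv[simp]: "subst2 Xv U V = U"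
  unfolding subst2_def Xv_def C2_def by (simp add: map_poly_pCons pCons_one)
lemma subst2_Yv[simp]: "subst2 Yv U V = V"
  unfolding subst2_def Yv_def C2_def by (simp add: map_poly_pCons pCons_one map_poly_1)

lemma subst2_add[simp]: "subst2 (A + B) U V = subst2 A U V + subst2 B U V"
  by (rule rh_add[OF rh_subst2])
lemma subst2_mult[simp]: "subst2 (A * B) U V = subst2 A U V * subst2 B U V"
  by (rule rh_mult[OF rh_subst2])
lemma subst2_diff[simp]: "subst2 (A - B) U V = subst2 A U V - subst2 B U V"
  by (rule rh_diff[OF rh_subst2])
lemma subst2_power[simp]: "subst2 (A ^ n) U V = subst2 A U V ^ n"
  by (rule rh_power[OF rh_subst2])

lemma subst2_comp: "subst2 (subst2 W A B) U V = subst2 W (subst2 A U V) (subst2 B U V)"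
  by (rule rh_unique[of "\<lambda>W. subst2 (subst2 W A B) U V" "\<lambda>W. subst2 W (subst2 A U V) (subst2 B U V)"])
     (simp_all add: rh_comp[OF rh_subst2 rh_subst2] rh_subst2)

lemma subst2_id: "subst2 W Xv Yv = W"
  by (rule rh_unique[of "\<lambda>W. subst2 W Xv Yv" "\<lambda>W. W"]) (simp_all add: rh_subst2 rh_id)

lemma rh_eval1_comm:
  assumes "rh H" "\<And>c. H (C2 c) = C2 c"
  shows "H (eval1 g U) = eval1 g (H U)"
  unfolding eval1_def
proof (induct g)
  case 0 then show ?case using rh_0[OF assms(1)] by simp
next
  case (pCons c g)
  have "poly (map_poly C2 (pCons c g)) W = C2 c + W * poly (map_poly C2 g) W" for W
    by (simp add: map_poly_pCons)
  then show ?case using pCons(2) by (simp add: assms rh_add[OF assms(1)] rh_mult[OF assms(1)])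
qed

lemma subst2_eval1[simp]: "subst2 (eval1 g W) U V = eval1 g (subst2 W U V)"
  by (rule rh_eval1_comm[OF rh_subst2]) simp

lemma emb2_C2[simp]: "emb2 (C2 c) = C2 (to_fract c)"
  unfolding emb2_def C2_def by simp
lemma emb2_Xv[simp]: "emb2 Xv = Xv"
  unfolding emb2_def Xv_def by (simp add: map_poly_pCons)
lemma emb2_Yv[simp]: "emb2 Yv = Yv"
  unfolding emb2_def Yv_def by (simp add: map_poly_pCons)
lemma emb2_add[simp]: "emb2 (A + B) = emb2 A + emb2 B" by (rule rh_add[OF rh_emb2])
lemma emb2_mult[simp]: "emb2 (A * B) = emb2 A * emb2 B" by (rule rh_mult[OF rh_emb2])
lemma emb2_diff[simp]: "emb2 (A - B) = emb2 A - emb2 B" by (rule rh_diff[OF rh_emb2])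
lemma emb2_power[simp]: "emb2 (A ^ n) = emb2 A ^ n" by (rule rh_power[OF rh_emb2])

lemma emb2_eval1[simp]: "emb2 (eval1 g U) = eval1 (map_poly to_fract g) (emb2 U)"
  unfolding eval1_def
proof (induct g)
  case 0 then show ?case using rh_0[OF rh_emb2] by simp
next
  case (pCons c g)
  have e1: "poly (map_poly C2 (pCons c g)) U = C2 c + U * poly (map_poly C2 g) U"
    by (simp add: map_poly_pCons)
  have e2: "map_poly to_fract (pCons c g) = pCons (to_fract c) (map_poly to_fract g)"
    by (simp add: map_poly_pCons)
  have e3: "poly (map_poly C2 (pCons (to_fract c) (map_poly to_fract g))) (emb2 U)
     = C2 (to_fract c) + emb2 U * poly (map_poly C2 (map_poly to_fract g)) (emb2 U)"
    by (simp add: map_poly_pCons)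
  show ?case unfolding e1 e2 e3 using pCons(2) by simp
qed

lemma emb2_subst2: "emb2 (subst2 W U V) = subst2 (emb2 W) (emb2 U) (emb2 V)"
  by (rule rh_unique[of "\<lambda>W. emb2 (subst2 W U V)" "\<lambda>W. subst2 (emb2 W) (emb2 U) (emb2 V)"])
     (simp_all add: rh_comp[OF rh_emb2 rh_subst2] rh_comp[OF rh_subst2 rh_emb2])

lemma coeff_emb2[simp]: "coeff (coeff (emb2 A) i) j = to_fract (coeff (coeff A i) j)"
  unfolding emb2_def by (simp add: coeff_map_poly)

lemma emb2_inj: assumes "emb2 A = emb2 B" shows "A = B"
proof (rule poly_eqI, rule poly_eqI)
  fix i j show "coeff (coeff A i) j = coeff (coeff B i) j"
    using arg_cong[OF assms, of "\<lambda>W. coeff (coeff W i) j"] by simp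
qed

lemma frob:
  fixes x y :: "'b::comm_ring_1"
  assumes p: "prime p" and c: "of_nat p = (0::'b)"
  shows "(x + y) ^ p = x ^ p + y ^ p"
proof -
  have p0: "p \<noteq> 0" using p by auto
  have "(x + y) ^ p = (\<Sum>k\<le>p. of_nat (p choose k) * x ^ k * y ^ (p - k))"
    by (rule binomial_ring)
  also have "\<dots> = (\<Sum>k\<in>{0,p}. of_nat (p choose k) * x ^ k * y ^ (p - k))"
  proof (rule sum.mono_neutral_right)
    show "\<forall>k\<in>{..p} - {0, p}. of_nat (p choose k) * x ^ k * y ^ (p - k) = 0"
    proof
      fix k assume k: "k \<in> {..p} - {0, p}"
      then have "p dvd (p choose k)" using p by (intro dvd_choose_prime) auto
      then obtain m where "(p choose k) = p * m" by blast
      then have "of_nat (p choose k) = (0::'b)" using c by simp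
      then show "of_nat (p choose k) * x ^ k * y ^ (p - k) = 0" by simp
    qed
  qed auto
  also have "\<dots> = x ^ p + y ^ p" using p0 by simp
  finally show ?thesis .
qed

definition subr :: "'b::comm_ring_1 set \<Rightarrow> bool" where
  "subr S \<longleftrightarrow> 0 \<in> S \<and> 1 \<in> S \<and> (\<forall>x\<in>S. \<forall>y\<in>S. x + y \<in> S \<and> x * y \<in> S \<and> -x \<in> S)"

lemma subr_0: "subr S \<Longrightarrow> 0 \<in> S" by (simp add: subr_def)
lemma subr_1: "subr S \<Longrightarrow> 1 \<in> S" by (simp add: subr_def)
lemma subr_add: "subr S \<Longrightarrow> x \<in> S \<Longrightarrow> y \<in> S \<Longrightarrow> x + y \<in> S" by (simp add: subr_def)
lemma subr_mult: "subr S \<Longrightarrow> x \<in> S \<Longrightarrow> y \<in> S \<Longrightarrow> x * y \<in> S" by (simp add: subr_def)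
lemma subr_uminus: "subr S \<Longrightarrow> x \<in> S \<Longrightarrow> - x \<in> S" by (simp add: subr_def)
lemma subr_diff: "subr S \<Longrightarrow> x \<in> S \<Longrightarrow> y \<in> S \<Longrightarrow> x - y \<in> S"
  using subr_add[of S x "-y"] subr_uminus[of S y] by simp
lemma subr_power: "subr S \<Longrightarrow> x \<in> S \<Longrightarrow> x ^ n \<in> S"
  by (induct n) (simp_all add: subr_1 subr_mult)
lemma subr_sum: "subr S \<Longrightarrow> (\<And>i. i \<in> A \<Longrightarrow> f i \<in> S) \<Longrightarrow> sum f A \<in> S"
  by (induct A rule: infinite_finite_induct) (simp_all add: subr_0 subr_add)
lemma subr_of_nat: "subr S \<Longrightarrow> of_nat n \<in> S"
  by (induct n) (simp_all add: subr_0 subr_1 subr_add)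

definition pin :: "'b::comm_ring_1 set \<Rightarrow> 'b poly set" where
  "pin S = {p. \<forall>i. coeff p i \<in> S}"

lemma pin_subr: assumes "subr S" shows "subr (pin S)"
  unfolding subr_def pin_def
  using assms
  by (auto simp: coeff_mult subr_0 subr_1 subr_add subr_mult subr_uminus coeff_1
      intro!: subr_sum)

lemma pin_const: "subr S \<Longrightarrow> c \<in> S \<Longrightarrow> [:c:] \<in> pin S"
  by (auto simp: pin_def coeff_pCons subr_0 split: nat.split)

lemma pin_pCons: "pCons c p \<in> pin S \<longleftrightarrow> c \<in> S \<and> p \<in> pin S"
  by (auto simp: pin_def coeff_pCons split: nat.split)

lemma pin_monom: "subr S \<Longrightarrow> c \<in> S \<Longrightarrow> monom c n \<in> pin S"
  by (auto simp: pin_def coeff_monom subr_0)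

lemma pin_pcompose: assumes S: "subr S" and w: "w \<in> pin S" and q: "q \<in> pin S"
  shows "pcompose w q \<in> pin S"
  using w
proof (induct w)
  case 0 then show ?case using S by (simp add: pin_def subr_0)
next
  case (pCons a w)
  then show ?case using pin_subr[OF S] q
    by (auto simp: pcompose_pCons pin_pCons intro!: subr_add[OF pin_subr[OF S]] subr_mult[OF pin_subr[OF S]] pin_const[OF S])
qed

lemma pin_smult: "subr S \<Longrightarrow> c \<in> S \<Longrightarrow> p \<in> pin S \<Longrightarrow> smult c p \<in> pin S"
  by (auto simp: pin_def subr_mult)

lemma coeff_lin_mult: fixes c :: "'b::comm_ring_1" shows "coeff ([:c, 1:] * W) m = c * coeff W m + (case m of 0 \<Rightarrow> 0 | Suc k \<Rightarrow> coeff W k)"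
  by (auto simp: coeff_pCons split: nat.split)

lemma coeff_pcompose_lin_top:
  fixes c :: "'b::idom"
  assumes "degree v \<le> n"
  shows "coeff (pcompose v [:c, 1:]) n = coeff v n"
proof (cases "degree v = n")
  case True
  have "lead_coeff (pcompose v [:c,1:]) = lead_coeff v"
    by (subst lead_coeff_comp) auto
  moreover have "degree (pcompose v [:c,1:]) = degree v" by (simp add: degree_pcompose)
  ultimately show ?thesis using True by simp
next
  case False
  then have "degree v < n" using assms by simp
  moreover have "degree (pcompose v [:c,1:]) = degree v" by (simp add: degree_pcompose)
  ultimately show ?thesis by (simp add: coeff_eq_0)
qed

lemma coeff_pcompose_lin_sub:
  fixes c :: "'b::idom"
  assumes "degree v \<le> Suc m"
  shows "coeff (pcompose v [:c, 1:]) m = coeff v m + of_nat (Suc m) * c * coeff v (Suc m)"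
  using assms
proof (induct v arbitrary: m)
  case 0 then show ?case by simp
next
  case (pCons a v)
  have dv: "degree v \<le> m" using pCons(3)
    by (auto simp: degree_pCons_eq_if split: if_splits)
  show ?case
  proof (cases m)
    case 0
    then have "degree v = 0" using dv by simp
    then obtain v0 where v0: "v = [:v0:]" by (metis degree_eq_zeroE)
    show ?thesis using 0 by (simp add: v0 pcompose_pCons)
  next
    case (Suc k)
    have ih: "coeff (pcompose v [:c,1:]) k = coeff v k + of_nat (Suc k) * c * coeff v (Suc k)"
      using pCons(2)[of k] dv Suc by simp
    have top: "coeff (pcompose v [:c,1:]) (Suc k) = coeff v (Suc k)"
      using coeff_pcompose_lin_top[of v "Suc k" c] dv Suc by simp
    show ?thesis
      using Suc ih top by (simp add: pcompose_pCons coeff_lin_mult algebra_simps)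
  qed
qed

lemma pcompose_monom': "pcompose (monom l k) q = smult l (q ^ k)"
  by (induct k) (simp_all add: monom_0 monom_Suc pcompose_pCons)

lemma pcompose_power': "pcompose (r ^ k) q = (pcompose r q) ^ k"
  by (induct k) (simp_all add: pcompose_mult pcompose_1)

definition Q0 :: "nat \<Rightarrow> 'b::comm_ring_1 \<Rightarrow> 'b poly" where
  "Q0 p c = [:0, 1:] ^ p - [:0, c ^ (p - 1):]"

lemma Q0_inv:
  fixes c :: "'b::comm_ring_1"
  assumes p: "prime p" and ch: "of_nat p = (0::'b)"
  shows "pcompose (Q0 p c) [:c, 1:] = Q0 p c"
proof -
  have chp: "of_nat p = (0::'b poly)" using ch by (simp add: of_nat_poly)
  have p1: "p \<ge> 1" using p prime_ge_1_nat by blast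
  have "pcompose (Q0 p c) [:c, 1:] = [:c,1:] ^ p - [:c^(p-1):] * [:c, 1:]"
    unfolding Q0_def by (simp add: pcompose_diff pcompose_power' pcompose_pCons)
  also have "[:c,1:] = [:c:] + [:0,1:]" by simp
  also have "([:c:] + [:0,1:]) ^ p = [:c:] ^ p + [:0,1:] ^ p" by (rule frob[OF p chp])
  also have "[:c^(p-1):] * ([:c:] + [:0,1:]) = [:c ^ p:] + [:0, c^(p-1):]"
  proof -
    have pp: "p = Suc (p - 1)" using p1 by simp
    have "c ^ (p - 1) * c = c ^ p" by (subst (2) pp) (simp only: power_Suc2)
    then show ?thesis by (simp add: algebra_simps)
  qed
  finally show ?thesis unfolding Q0_def by (simp add: poly_const_pow)
qed

lemma degree_lessI':
  assumes "degree r \<le> n" "coeff r n = 0" "n > 0"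
  shows "degree r < n"
  using assms by (metis le_neq_implies_less leading_coeff_0_iff degree_0)

lemma L1:
  fixes c :: "'b::idom"
  assumes p: "prime p" and ch: "of_nat p = (0::'b)"
    and chd: "\<And>n. of_nat n = (0::'b) \<Longrightarrow> p dvd n"
    and c0: "c \<noteq> 0" and S: "subr S" and cS: "c \<in> S"
  shows "pcompose v [:c, 1:] = v \<Longrightarrow> v \<in> pin S \<Longrightarrow> \<exists>w. v = pcompose w (Q0 p c) \<and> w \<in> pin S"
proof (induct "degree v" arbitrary: v rule: less_induct)
  case less
  have p2: "p \<ge> 2" using p prime_ge_2_nat by blast
  show ?case
  proof (cases "degree v = 0")
    case True
    then obtain v0 where "v = [:v0:]" by (metis degree_eq_zeroE)
    then show ?thesis using less by (intro exI[of _ v]) simp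
  next
    case False
    define n where "n = degree v"
    define l where "l = lead_coeff v"
    obtain m where nm: "n = Suc m" using False n_def not0_implies_Suc by blast
    have l0: "l \<noteq> 0" using False l_def by auto
    have "coeff (pcompose v [:c,1:]) m = coeff v m + of_nat n * c * l"
      using coeff_pcompose_lin_sub[of v m c] nm n_def l_def by simp
    then have "of_nat n * c * l = 0" using less(2) by simp
    then have "of_nat n = (0::'b)" using c0 l0 by simp
    then have "p dvd n" by (rule chd)
    then obtain k where nk: "n = p * k" by blast
    define Qk where "Qk = Q0 p c ^ k"
    have dQ: "degree (Q0 p c) = p"
    proof -
      have "degree ([:0, 1:] ^ p :: 'b poly) = p" by (rule degree_linear_power)
      moreover have "degree (- [:0, c ^ (p - 1):]) \<le> 1" by simp
      ultimately show ?thesis unfolding Q0_def using p2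
        by (simp only: diff_conv_add_uminus, subst degree_add_eq_left) auto
    qed
    have lQ: "lead_coeff (Q0 p c) = 1"
    proof -
      have "coeff ([:0, 1:] ^ p :: 'b poly) p = 1"
        by (rule coeff_linear_power)
      then show ?thesis using dQ p2 unfolding Q0_def by (simp add: coeff_pCons split: nat.split)
    qed
    have Q00: "Q0 p c \<noteq> 0" using lQ by auto
    have dQk: "degree Qk = n" unfolding Qk_def nk using dQ Q00
      by (simp add: degree_power_eq mult.commute)
    have lQk: "lead_coeff Qk = 1" unfolding Qk_def using lQ by (simp add: lead_coeff_power)
    have Qkinv: "pcompose Qk [:c,1:] = Qk" unfolding Qk_def
      by (simp add: pcompose_power' Q0_inv[OF p ch])
    have QS: "Q0 p c \<in> pin S" unfolding Q0_def
      by (intro subr_diff[OF pin_subr[OF S]] subr_power[OF pin_subr[OF S]])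
         (auto simp: pin_pCons pin_const S subr_0 subr_1 subr_power cS subr_0[OF pin_subr[OF S]])
    define v' where "v' = v - smult l Qk"
    have dv': "degree v' < degree v"
    proof -
      have "degree v' \<le> n" unfolding v'_def n_def
        by (metis degree_diff_le degree_smult_le dQk le_refl n_def)
      moreover have "coeff v' n = 0" unfolding v'_def using lQk dQk l_def n_def by simp
      ultimately show ?thesis using degree_lessI'[of v' n] nm n_def by simp
    qed
    have iv': "pcompose v' [:c,1:] = v'" unfolding v'_def
      using less(2) Qkinv by (simp add: pcompose_diff pcompose_smult)
    have lS: "l \<in> S" using less(3) unfolding l_def pin_def by simp
    have v'S: "v' \<in> pin S" unfolding v'_def Qk_def
      by (intro subr_diff[OF pin_subr[OF S]] pin_smult[OF S] lS less(3) subr_power[OF pin_subr[OF S]] QS)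
    obtain w' where w': "v' = pcompose w' (Q0 p c)" "w' \<in> pin S"
      using less(1)[OF dv' iv' v'S] by blast
    have "v = pcompose (w' + monom l k) (Q0 p c)"
      using w'(1) unfolding v'_def Qk_def by (simp add: pcompose_add pcompose_monom' algebra_simps)
    moreover have "w' + monom l k \<in> pin S"
      by (intro subr_add[OF pin_subr[OF S]] w'(2) pin_monom[OF S lS])
    ultimately show ?thesis by blast
  qed
qed

lemma to_fract_power[simp]: "to_fract (x ^ n) = to_fract x ^ n"
  by (induct n) (simp_all add: to_fract_mult)

lemma pin_C2: "subr S \<Longrightarrow> c \<in> S \<Longrightarrow> C2 c \<in> pin (pin S)"
  unfolding C2_def by (intro pin_const pin_subr) auto

lemma pin_Xv: "subr S \<Longrightarrow> Xv \<in> pin (pin S)"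
  unfolding Xv_def by (intro pin_const pin_subr) (auto simp: pin_pCons subr_0 subr_1 pin_const subr_0[OF pin_subr])

lemma pin_Yv: "subr S \<Longrightarrow> Yv \<in> pin (pin S)"
  unfolding Yv_def
  by (auto simp: pin_pCons subr_0 subr_1 pin_const pin_subr intro: subr_0[OF pin_subr])

lemma pin_subst2:
  assumes S: "subr S" and W: "W \<in> pin (pin S)" and A: "A \<in> pin (pin S)" and B: "B \<in> pin (pin S)"
  shows "subst2 W A B \<in> pin (pin S)"
proof (rule biv_induct_in[where S=S and W=W])
  show "\<forall>i j. coeff (coeff W i) j \<in> S" using W by (simp add: pin_def)
  show "0 \<in> S" using S by (rule subr_0)
  have SS: "subr (pin (pin S))" using S by (intro pin_subr)
  show "subst2 (C2 c) A B \<in> pin (pin S)" if "c \<in> S" for c using pin_C2[OF S that] by simp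
  show "subst2 Xv A B \<in> pin (pin S)" using A by simp
  show "subst2 Yv A B \<in> pin (pin S)" using B by simp
  show "subst2 (X + Y) A B \<in> pin (pin S)" if "subst2 X A B \<in> pin (pin S)" "subst2 Y A B \<in> pin (pin S)" for X Y
    using subr_add[OF SS that] by simp
  show "subst2 (X * Y) A B \<in> pin (pin S)" if "subst2 X A B \<in> pin (pin S)" "subst2 Y A B \<in> pin (pin S)" for X Y
    using subr_mult[OF SS that] by simp
qed

lemma pin_eval1:
  assumes S: "subr S" and g: "g \<in> pin S" and U: "U \<in> pin (pin S)"
  shows "eval1 g U \<in> pin (pin S)"
  using g
proof (induct g)
  case 0 then show ?case using S by (simp add: eval1_def subr_0 pin_subr)
next
  case (pCons c g)
  have e: "eval1 (pCons c g) U = C2 c + U * eval1 g U"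
    by (simp add: eval1_def map_poly_pCons)
  show ?case unfolding e using pCons(2,3) U S
    by (intro subr_add[OF pin_subr[OF pin_subr[OF S]]] subr_mult[OF pin_subr[OF pin_subr[OF S]]] pin_C2)
       (auto simp: pin_pCons)
qed

lemma pin_emb2: "emb2 W \<in> pin (pin (range to_fract))"
  by (simp add: pin_def)

lemma subr_range_to_fract: "subr (range (to_fract :: 'a::idom \<Rightarrow> _))"
  unfolding subr_def by (auto simp flip: to_fract_add to_fract_mult to_fract_uminus intro: to_fract_0[symmetric] to_fract_1[symmetric])

lemma Rloc_subr:
  fixes b :: "'a::idom"
  assumes b: "b \<noteq> 0"
  shows "subr (Rloc b)"
proof -
  let ?b = "to_fract b"
  have b0: "?b \<noteq> 0" using b by simp
  have add: "to_fract r1 / ?b ^ n1 + to_fract r2 / ?b ^ n2 = to_fract (r1 * b ^ n2 + r2 * b ^ n1) / ?b ^ (n1 + n2)" for r1 r2 n1 n2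
    using b0 by (simp add: field_simps power_add)
  have mul: "(to_fract r1 / ?b ^ n1) * (to_fract r2 / ?b ^ n2) = to_fract (r1 * r2) / ?b ^ (n1 + n2)" for r1 r2 n1 n2
    using b0 by (simp add: field_simps power_add)
  have neg: "- (to_fract r1 / ?b ^ n1) = to_fract (- r1) / ?b ^ n1" for r1 n1
    by simp
  show ?thesis unfolding subr_def Rloc_def
    apply (intro conjI)
      apply (rule CollectI, rule exI[of _ 0], rule exI[of _ 0], simp)
     apply (rule CollectI, rule exI[of _ 1], rule exI[of _ 0], simp)
    apply (auto simp only: add mul neg)
      apply blast+
    done
qed

lemma Rloc_to_fract: "to_fract r \<in> Rloc b"
  unfolding Rloc_def by (rule CollectI, rule exI[of _ r], rule exI[of _ 0]) simp

lemma Rloc_inv: "inverse (to_fract b) \<in> Rloc b"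
  unfolding Rloc_def by (rule CollectI, rule exI[of _ 1], rule exI[of _ 1]) (simp add: field_simps)

lemma range_Rloc: "range to_fract \<subseteq> Rloc b"
  using Rloc_to_fract by blast

lemma pin_mono: "S \<subseteq> T \<Longrightarrow> pin S \<subseteq> pin T"
  by (auto simp: pin_def)

lemma C2_dvd_iff:
  fixes W :: "'a::idom poly poly"
  shows "C2 c dvd W \<longleftrightarrow> (\<forall>i j. c dvd coeff (coeff W i) j)"
  unfolding C2_def by (simp add: const_poly_dvd_iff)

lemma dvd_power_diff': "(M::'b::comm_ring_1) dvd A - B \<Longrightarrow> M dvd A ^ n - B ^ n"
proof (induct n)
  case 0 then show ?case by simp
next
  case (Suc n)
  have "A ^ Suc n - B ^ Suc n = A * (A ^ n - B ^ n) + (A - B) * B ^ n"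
    by (simp add: algebra_simps)
  then show ?case using Suc by (metis dvd_add dvd_mult dvd_mult2)
qed

lemma subst2_cong:
  fixes M :: "'b::comm_ring_1 poly poly"
  assumes "M dvd U - U'" "M dvd V - V'"
  shows "M dvd subst2 W U V - subst2 W U' V'"
proof (induct W rule: biv_induct)
  case (1 c) then show ?case by simp
next
  case 2 then show ?case using assms by simp
next
  case 3 then show ?case using assms by simp
next
  case (4 A B)
  have "subst2 (A + B) U V - subst2 (A + B) U' V' = (subst2 A U V - subst2 A U' V') + (subst2 B U V - subst2 B U' V')"
    by simp
  then show ?case using 4 by (metis dvd_add)
next
  case (5 A B)
  have "subst2 (A * B) U V - subst2 (A * B) U' V' = subst2 A U V * (subst2 B U V - subst2 B U' V') + (subst2 A U V - subst2 A U' V') * subst2 B U' V'"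
    by (simp add: algebra_simps)
  then show ?case using 5 by (metis dvd_add dvd_mult dvd_mult2)
qed

lemma eval1_pCons: "eval1 (pCons c g) U = C2 c + U * eval1 g U"
  by (simp add: eval1_def map_poly_pCons)

lemma eval1_cong:
  fixes M :: "'b::comm_ring_1 poly poly"
  assumes "M dvd U - U'"
  shows "M dvd eval1 g U - eval1 g U'"
proof (induct g)
  case 0 then show ?case by (simp add: eval1_def)
next
  case (pCons c g)
  have "eval1 (pCons c g) U - eval1 (pCons c g) U' = U * (eval1 g U - eval1 g U') + (U - U') * eval1 g U'"
    by (simp add: eval1_pCons algebra_simps)
  then show ?case using pCons assms by (metis dvd_add dvd_mult dvd_mult2)
qed

lemma eval1_add: "eval1 (g + h) U = eval1 g U + eval1 h U"
  by (rule rh_add[OF rh_eval1])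

lemma taylor2:
  fixes A H :: "'b::idom poly poly"
  shows "H ^ 2 dvd eval1 g (A + H) - eval1 g A - H * eval1 (pderiv g) A"
proof (induct g)
  case 0 then show ?case by (simp add: eval1_def)
next
  case (pCons c g)
  have h1: "H dvd eval1 g (A + H) - eval1 g A" by (rule eval1_cong) simp
  have "eval1 (pCons c g) (A + H) - eval1 (pCons c g) A - H * eval1 (pderiv (pCons c g)) A
     = A * (eval1 g (A + H) - eval1 g A - H * eval1 (pderiv g) A) + H * (eval1 g (A + H) - eval1 g A)"
    by (simp add: eval1_pCons pderiv_pCons eval1_add algebra_simps)
  moreover have "H ^ 2 dvd H * (eval1 g (A + H) - eval1 g A)"
    using h1 by (simp add: power2_eq_square)
  ultimately show ?case using pCons by (metis dvd_add dvd_mult)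
qed

definition lift :: "'b::comm_ring_1 poly \<Rightarrow> 'b poly poly" where
  "lift e = map_poly (\<lambda>r. [:r:]) e"

lemma rh_lift: "rh lift"
  unfolding lift_def[abs_def] by (rule rh_map_poly[OF rh_const])

lemma lift_C2: "lift [:r:] = C2 r" by (simp add: lift_def C2_def)
lemma lift_Yv: "lift [:0,1:] = Yv" by (simp add: lift_def Yv_def map_poly_pCons pCons_one)

lemma eval1_lift: "eval1 g (lift e) = lift (pcompose g e)"
proof (induct g)
  case 0 then show ?case by (simp add: eval1_def lift_def)
next
  case (pCons c g)
  show ?case using pCons
    by (simp add: eval1_pCons pcompose_pCons rh_add[OF rh_lift] rh_mult[OF rh_lift] lift_C2)
qed

definition Ext :: "nat \<Rightarrow> 'b::comm_ring_1 poly poly \<Rightarrow> 'b poly" where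
  "Ext m W = map_poly (\<lambda>c. coeff c m) W"

lemma coeff_Ext[simp]: "coeff (Ext m W) j = coeff (coeff W j) m"
  by (simp add: Ext_def coeff_map_poly)

lemma Ext_add: "Ext m (A + B) = Ext m A + Ext m B"
  by (rule poly_eqI) simp

lemma Ext_C2: "Ext m (C2 r) = (if m = 0 then [:r:] else 0)"
  by (rule poly_eqI) (auto simp: C2_def coeff_pCons split: nat.split)

lemma Ext_lift_mult: "Ext m (lift e * W) = e * Ext m W"
proof (induct e)
  case 0 then show ?case by (simp add: lift_def Ext_def)
next
  case (pCons c e)
  have l: "lift (pCons c e) = pCons [:c:] (lift e)" by (simp add: lift_def map_poly_pCons)
  have e1: "Ext m (smult [:c:] W) = smult c (Ext m W)"
    by (rule poly_eqI) simp
  have e2: "Ext m (pCons 0 V) = pCons 0 (Ext m V)" for V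
    by (rule poly_eqI) (simp add: coeff_pCons split: nat.split)
  show ?case unfolding l using pCons by (simp add: Ext_add e1 e2)
qed

lemma Ext_Xv_mult: "Ext (Suc m) (Xv * W) = Ext m W"
  by (rule poly_eqI) (simp add: Xv_def)

lemma Ext_C2_mult: "Ext m (C2 r * W) = smult r (Ext m W)"
  by (rule poly_eqI) (simp add: C2_def)

definition degx :: "'b::comm_ring_1 poly poly \<Rightarrow> nat \<Rightarrow> bool" where
  "degx W k \<longleftrightarrow> (\<forall>m>k. Ext m W = 0)"

lemma degx_coeff: "degx W k \<Longrightarrow> degree (coeff W j) \<le> k"
  unfolding degx_def by (intro degree_le) (metis coeff_Ext coeff_0)

lemma degx_intro: assumes "\<And>j. degree (coeff W j) \<le> k" shows "degx W k"
  unfolding degx_def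
proof (intro allI impI poly_eqI)
  fix m n assume "k < m"
  then have "degree (coeff W n) < m" using assms le_less_trans by blast
  then show "coeff (Ext m W) n = coeff 0 n" by (simp add: coeff_eq_0)
qed

lemma H_lemma:
  fixes b :: "'b::comm_ring_1" and e :: "'b poly"
  defines "U \<equiv> C2 b * Xv + lift e"
  assumes "degree c \<le> n"
  shows "degx (eval1 c U) n \<and> Ext n (eval1 c U) = [:coeff c n * b ^ n:]"
  using assms(2)
proof (induct c arbitrary: n)
  case 0 then show ?case by (simp add: eval1_def degx_def Ext_def)
next
  case (pCons r c)
  have e: "eval1 (pCons r c) U = C2 r + C2 b * (Xv * eval1 c U) + lift e * eval1 c U"
    by (simp add: eval1_pCons U_def algebra_simps)
  show ?case
  proof (cases n)
    case 0
    then have "c = 0" using pCons(3) by (auto simp: degree_pCons_eq_if split: if_splits)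
    then show ?thesis using 0 by (simp add: eval1_def degx_def Ext_C2)
  next
    case (Suc n')
    have dc: "degree c \<le> n'" using pCons(3) Suc by (auto simp: degree_pCons_eq_if split: if_splits)
    note ih = pCons(2)[OF dc]
    have d1: "degx (eval1 (pCons r c) U) n"
      unfolding degx_def
    proof (intro allI impI)
      fix m assume m: "n < m"
      then obtain m' where m': "m = Suc m'" "n' < m'" using Suc by (cases m) auto
      have "Ext m' (eval1 c U) = 0" using ih m'(2) by (simp add: degx_def)
      moreover have "Ext m (eval1 c U) = 0" using ih m Suc by (simp add: degx_def)
      ultimately show "Ext m (eval1 (pCons r c) U) = 0"
        unfolding e using m'(1) by (simp add: Ext_add Ext_C2 Ext_C2_mult Ext_Xv_mult Ext_lift_mult)
    qed
    have "Ext (Suc n') (eval1 c U) = 0" using ih by (simp add: degx_def)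
    then have "Ext n (eval1 (pCons r c) U) = smult b [:coeff c n' * b ^ n':]"
      unfolding e using Suc ih by (simp add: Ext_add Ext_C2 Ext_C2_mult Ext_Xv_mult Ext_lift_mult)
    also have "\<dots> = [:coeff (pCons r c) n * b ^ n:]" using Suc by (simp add: algebra_simps)
    finally show ?thesis using d1 by simp
  qed
qed

lemma Ext_subst2:
  fixes b :: "'b::comm_ring_1" and e :: "'b poly"
  defines "U \<equiv> C2 b * Xv + lift e"
  assumes "degx W m"
  shows "Ext m (subst2 W U (lift v)) = smult (b ^ m) (pcompose (Ext m W) v)"
  using assms(2)
proof (induct W)
  case 0 then show ?case by (simp add: subst2_def Ext_def)
next
  case (pCons c W)
  have dW: "degx W m" using pCons(3) unfolding degx_def
    by (metis (no_types, lifting) coeff_Ext coeff_pCons_Suc poly_eqI coeff_0)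
  have dc: "degree c \<le> m" using degx_coeff[OF pCons(3), of 0] by simp
  have e: "subst2 (pCons c W) U (lift v) = eval1 c U + lift v * subst2 W U (lift v)"
    by (simp add: subst2_def eval1_def map_poly_pCons)
  have e2: "Ext m (pCons c W) = pCons (coeff c m) (Ext m W)"
    by (rule poly_eqI) (simp add: coeff_pCons split: nat.split)
  show ?case unfolding e e2 using H_lemma[OF dc, of b e] pCons(2)[OF dW]
    by (simp add: U_def Ext_add Ext_lift_mult pcompose_pCons smult_add_right mult.commute)
qed

lemma coeff_pcompose_monom:
  fixes g :: "'b::comm_ring_1 poly"
  assumes p: "p > 0"
  shows "coeff (pcompose g (monom 1 p)) k = (if p dvd k then coeff g (k div p) else 0)"
proof (induct g arbitrary: k)
  case 0 then show ?case by simp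
next
  case (pCons a g)
  have "coeff (pcompose (pCons a g) (monom 1 p)) k = (if k = 0 then a else 0) + (if k < p then 0 else coeff (pcompose g (monom 1 p)) (k - p))"
    by (simp add: pcompose_pCons coeff_monom_mult coeff_pCons split: nat.split)
  also have "\<dots> = (if p dvd k then coeff (pCons a g) (k div p) else 0)"
  proof (cases "k < p")
    case True
    then show ?thesis using p by (auto simp: dvd_imp_le)
  next
    case False
    then have kp: "k - p + p = k" by simp
    have "p dvd (k - p) \<longleftrightarrow> p dvd k" using False by (metis dvd_add_triv_right_iff kp)
    moreover have "p dvd k \<Longrightarrow> k div p = Suc ((k - p) div p)" using False p
      by (metis Suc_eq_plus1 add.commute div_add_self2 kp nat_neq_iff)
    ultimately show ?thesis using pCons False p by auto
  qed
  finally show ?case .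
qed

lemma B1core:
  fixes pi b :: "'a::idom" and P0 :: "'a poly poly"
  assumes pi: "prime_elem pi" and nb: "\<not> pi dvd b" and p: "p > 0"
    and dv: "C2 pi dvd subst2 P0 (C2 b * Xv + lift e) (lift (monom 1 p))"
  shows "C2 pi dvd P0"
proof (rule ccontr)
  assume nd: "\<not> C2 pi dvd P0"
  define f where "f = (\<lambda>r. if pi dvd r then 0 else r)"
  have f0: "f 0 = 0" by (simp add: f_def)
  define P2 where "P2 = map_poly (map_poly f) P0"
  have cP2: "coeff (coeff P2 i) j = f (coeff (coeff P0 i) j)" for i j
    by (simp add: P2_def coeff_map_poly f0)
  have "C2 pi dvd P0 - P2" unfolding C2_dvd_iff by (simp add: cP2 f_def)
  then obtain Z where Z: "P0 - P2 = C2 pi * Z" by blast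
  let ?U = "C2 b * Xv + lift e" and ?V = "lift (monom 1 p)"
  have "subst2 P0 ?U ?V - subst2 P2 ?U ?V = C2 pi * subst2 Z ?U ?V"
    using arg_cong[OF Z, of "\<lambda>W. subst2 W ?U ?V"] by simp
  then have "subst2 P2 ?U ?V = subst2 P0 ?U ?V - C2 pi * subst2 Z ?U ?V"
    by (simp add: algebra_simps)
  then have dv2: "C2 pi dvd subst2 P2 ?U ?V" using dv
    by (simp add: dvd_diff)
  have P20: "P2 \<noteq> 0"
  proof
    assume "P2 = 0" then have "C2 pi dvd P0" using Z by simp
    then show False using nd by simp
  qed
  define J where "J = {j. coeff P2 j \<noteq> 0}"
  have finJ: "finite J" unfolding J_def
    by (rule finite_subset[of _ "{..degree P2}"]) (auto intro: le_degree)
  have "degree P2 \<in> J" using P20 unfolding J_def by simp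
  then have J0: "J \<noteq> {}" by blast
  define m where "m = Max ((\<lambda>j. degree (coeff P2 j)) ` J)"
  have "m \<in> (\<lambda>j. degree (coeff P2 j)) ` J"
    unfolding m_def using finJ J0 by (intro Max_in) auto
  then obtain j0 where j0: "j0 \<in> J" "degree (coeff P2 j0) = m" by auto
  have dx: "degx P2 m"
  proof (rule degx_intro)
    fix j show "degree (coeff P2 j) \<le> m"
    proof (cases "j \<in> J")
      case True
      then show ?thesis unfolding m_def using finJ by (intro Max_ge) auto
    next
      case False
      then show ?thesis unfolding J_def by simp
    qed
  qed
  define r where "r = coeff (coeff P2 j0) m"
  have "lead_coeff (coeff P2 j0) \<noteq> 0" using j0(1) unfolding J_def by simp
  then have r0: "r \<noteq> 0" using j0(2) unfolding r_def by simp
  have rnd: "\<not> pi dvd r" using r0 unfolding r_def cP2 f_def by auto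
  have "coeff (Ext m (subst2 P2 ?U ?V)) (p * j0) = b ^ m * r"
    using Ext_subst2[OF dx, of b e "monom 1 p"] p by (simp add: coeff_pcompose_monom r_def)
  moreover have "pi dvd coeff (Ext m (subst2 P2 ?U ?V)) (p * j0)"
    using dv2 unfolding C2_dvd_iff by simp
  ultimately have "pi dvd b ^ m * r" by simp
  then have "pi dvd b ^ m \<or> pi dvd r" using pi by (simp add: prime_elem_dvd_mult_iff)
  then show False using pi nb rnd prime_elem_dvd_power by blast
qed

lemma C2_mult: "C2 (x * y) = C2 x * C2 y" by (rule rh_mult[OF rh_C2])
lemma C2_1: "C2 1 = 1" by (rule rh_1[OF rh_C2])
lemma C2_power: "C2 (x ^ n) = C2 x ^ n" by (rule rh_power[OF rh_C2])
lemma C2_eq_0_iff: "C2 x = 0 \<longleftrightarrow> x = 0" by (simp add: C2_def)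

lemma descent:
  fixes a b :: "'a::factorial_ring_gcd" and U V :: "'a poly poly"
  assumes B1: "\<And>pi P0. prime pi \<Longrightarrow> pi dvd a \<Longrightarrow> \<not> pi dvd b \<Longrightarrow> C2 pi dvd subst2 P0 U V \<Longrightarrow> C2 pi dvd P0"
  shows "D \<noteq> 0 \<Longrightarrow> (\<forall>pi. prime pi \<longrightarrow> pi dvd D \<longrightarrow> pi dvd a) \<Longrightarrow> C2 D * u0 = subst2 P0 U V \<Longrightarrow>
    \<exists>D2 P2 k. D2 \<noteq> 0 \<and> D2 dvd b ^ k \<and>
      emb2 P0 * C2 (inverse (to_fract D)) = emb2 P2 * C2 (inverse (to_fract D2))"
proof (induct D arbitrary: u0 P0 rule: prime_divisors_induct)
  case zero then show ?case by simp
next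
  case (unit x)
  then show ?case by (intro exI[of _ x] exI[of _ P0] exI[of _ 0]) auto
next
  case (factor q x)
  have x0: "x \<noteq> 0" using factor(3) by auto
  have q0: "q \<noteq> 0" using factor(1) by auto
  have xa: "\<forall>pi. prime pi \<longrightarrow> pi dvd x \<longrightarrow> pi dvd a" using factor(4) by auto
  show ?case
  proof (cases "q dvd b")
    case True
    have "C2 x * (C2 q * u0) = subst2 P0 U V" using factor(5) by (simp add: C2_mult algebra_simps)
    from factor(2)[OF x0 xa this] obtain D2 P2 k where
      h: "D2 \<noteq> 0" "D2 dvd b ^ k" "emb2 P0 * C2 (inverse (to_fract x)) = emb2 P2 * C2 (inverse (to_fract D2))"
      by blast
    have "emb2 P0 * C2 (inverse (to_fract (q * x))) = (emb2 P0 * C2 (inverse (to_fract x))) * C2 (inverse (to_fract q))"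
      by (simp add: to_fract_mult C2_mult algebra_simps)
    also have "\<dots> = emb2 P2 * C2 (inverse (to_fract (q * D2)))"
      unfolding h(3) by (simp add: to_fract_mult C2_mult algebra_simps)
    finally show ?thesis using h q0 True
      by (intro exI[of _ "q * D2"] exI[of _ P2] exI[of _ "Suc k"]) (auto simp: mult_dvd_mono)
  next
    case False
    have qa: "q dvd a" using factor(4) factor(1) by auto
    have "C2 q dvd subst2 P0 U V" using factor(5)[symmetric] by (simp add: C2_mult algebra_simps)
    from B1[OF factor(1) qa False this] obtain P0' where P0': "P0 = C2 q * P0'" by blast
    have "C2 q * (C2 x * u0) = C2 q * subst2 P0' U V"
      using factor(5) unfolding P0' by (simp add: C2_mult algebra_simps)
    then have "C2 x * u0 = subst2 P0' U V" using q0 by (simp add: C2_eq_0_iff)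
    from factor(2)[OF x0 xa this] obtain D2 P2 k where
      h: "D2 \<noteq> 0" "D2 dvd b ^ k" "emb2 P0' * C2 (inverse (to_fract x)) = emb2 P2 * C2 (inverse (to_fract D2))"
      by blast
    have qq: "C2 (to_fract q) * C2 (inverse (to_fract q)) = 1"
      using q0 by (simp flip: C2_mult add: C2_1)
    have "emb2 P0 * C2 (inverse (to_fract (q * x))) = (emb2 P0' * C2 (inverse (to_fract x))) * (C2 (to_fract q) * C2 (inverse (to_fract q)))"
      unfolding P0' by (simp add: to_fract_mult C2_mult algebra_simps)
    also have "\<dots> = emb2 P2 * C2 (inverse (to_fract D2))" unfolding qq h(3) by simp
    finally show ?thesis using h by blast
  qed
qed

lemma final_Rloc:
  fixes b D2 :: "'a::idom"
  assumes b0: "b \<noteq> 0" and D0: "D2 \<noteq> 0" and dv: "D2 dvd b ^ k"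
  shows "emb2 P2 * C2 (inverse (to_fract D2)) \<in> pin (pin (Rloc b))"
proof -
  obtain t where t: "b ^ k = D2 * t" using dv by blast
  have t0: "t \<noteq> 0" using t b0 by auto
  have "inverse (to_fract D2) = to_fract t / to_fract b ^ k"
    using t t0 D0 by (simp flip: to_fract_power add: to_fract_mult field_simps)
  then have inR: "inverse (to_fract D2) \<in> Rloc b" unfolding Rloc_def by blast
  have S: "subr (Rloc b)" using b0 by (rule Rloc_subr)
  have "emb2 P2 \<in> pin (pin (Rloc b))"
    using pin_emb2[of P2] pin_mono[OF pin_mono[OF range_Rloc[of b]]] by blast
  then show ?thesis
    by (intro subr_mult[OF pin_subr[OF pin_subr[OF S]]] pin_C2[OF S inR])
qed

lemma common_denom:
  fixes a :: "'a::idom"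
  assumes a0: "a \<noteq> 0" and W: "W \<in> pin (pin (Rloc a))"
  shows "\<exists>N W0. W = emb2 W0 * C2 (inverse (to_fract a) ^ N)"
proof (rule biv_induct_in[where S="Rloc a" and W=W])
  let ?i = "inverse (to_fract a)"
  have ai: "to_fract a * ?i = 1" using a0 by simp
  show "\<forall>i j. coeff (coeff W i) j \<in> Rloc a" using W by (simp add: pin_def)
  show "0 \<in> Rloc a" using Rloc_subr[OF a0] by (rule subr_0)
  show "\<exists>N W0. C2 c = emb2 W0 * C2 (?i ^ N)" if cR: "c \<in> Rloc a" for c
  proof -
    obtain r n where c: "c = to_fract r / to_fract a ^ n" using cR unfolding Rloc_def by blast
    have "C2 c = emb2 (C2 r) * C2 (?i ^ n)" unfolding c
      by (simp add: C2_mult[symmetric] field_simps power_inverse)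
    then show ?thesis by blast
  qed
  show "\<exists>N W0. Xv = emb2 W0 * C2 (?i ^ N)"
    by (rule exI[of _ 0], rule exI[of _ Xv]) (simp add: C2_1)
  show "\<exists>N W0. Yv = emb2 W0 * C2 (?i ^ N)"
    by (rule exI[of _ 0], rule exI[of _ Yv]) (simp add: C2_1)
  show "\<exists>N W0. A + B = emb2 W0 * C2 (?i ^ N)"
    if hA: "\<exists>N W0. A = emb2 W0 * C2 (?i ^ N)" and hB: "\<exists>N W0. B = emb2 W0 * C2 (?i ^ N)" for A B
  proof -
    obtain N1 A0 where A: "A = emb2 A0 * C2 (?i ^ N1)" using hA by blast
    obtain N2 B0 where B: "B = emb2 B0 * C2 (?i ^ N2)" using hB by blast
    have e1: "to_fract a ^ N2 * ?i ^ (N1 + N2) = ?i ^ N1"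
      using a0 by (simp add: power_add field_simps)
    have e2: "to_fract a ^ N1 * ?i ^ (N1 + N2) = ?i ^ N2"
      using a0 by (simp add: power_add field_simps)
    have "A + B = emb2 (A0 * C2 (a ^ N2) + B0 * C2 (a ^ N1)) * C2 (?i ^ (N1 + N2))"
      unfolding A B
      by (simp add: algebra_simps C2_mult[symmetric] mult.assoc[symmetric]) (simp add: mult.assoc C2_mult[symmetric] e1 e2)
    then show ?thesis by blast
  qed
  show "\<exists>N W0. A * B = emb2 W0 * C2 (?i ^ N)"
    if hA: "\<exists>N W0. A = emb2 W0 * C2 (?i ^ N)" and hB: "\<exists>N W0. B = emb2 W0 * C2 (?i ^ N)" for A B
  proof -
    obtain N1 A0 where A: "A = emb2 A0 * C2 (?i ^ N1)" using hA by blast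
    obtain N2 B0 where B: "B = emb2 B0 * C2 (?i ^ N2)" using hB by blast
    have "A * B = emb2 (A0 * B0) * C2 (?i ^ (N1 + N2))"
      unfolding A B by (simp add: power_add C2_mult algebra_simps)
    then show ?thesis by blast
  qed
qed

lemma eval1_0[simp]: "eval1 0 U = 0" by (simp add: eval1_def)
lemma eval1_const[simp]: "eval1 [:c:] U = C2 c" by (simp add: eval1_def)
declare eval1_pCons[simp]

lemma eval1_Xv: "eval1 c Xv = [:c:]"
proof (induct c)
  case 0 then show ?case by simp
next
  case (pCons a c)
  then show ?case using const_pCons_split[of a c] by simp
qed

lemma subst2_Xv_pcompose: "subst2 W Xv V = pcompose W V"
proof -
  have "(\<lambda>c. poly (map_poly C2 c) Xv) = (\<lambda>c. [:c:])"
    using eval1_Xv unfolding eval1_def by blast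
  then show ?thesis unfolding subst2_def pcompose_altdef by (rule arg_cong[where f="\<lambda>h. poly (map_poly h W) V"])
qed

lemma eval1_pcompose: "eval1 (pcompose g h) U = eval1 g (eval1 h U)"
proof (induct g)
  case 0 then show ?case by simp
next
  case (pCons c g)
  have "eval1 (pcompose (pCons c g) h) U = eval1 [:c:] U + eval1 h U * eval1 (pcompose g h) U"
    by (simp add: pcompose_pCons rh_add[OF rh_eval1] rh_mult[OF rh_eval1] del: eval1_pCons eval1_const)
  then show ?case using pCons by simp
qed

lemma eval1_C2_mult: "eval1 (smult c g) U = C2 c * eval1 g U"
  by (induct g) (simp_all add: C2_mult algebra_simps)

lemma eval1_monom1: "eval1 (monom 1 n) U = U ^ n"
  by (induct n) (simp_all add: monom_0 monom_Suc C2_1)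

locale thm_setting =
  fixes a d :: "'a::factorial_ring_gcd" and \<theta> G :: "'a poly" and p :: nat
    and f F q :: "'a poly poly" and phiX q1 :: "'a fract poly poly"
    and phi :: "'a fract poly poly \<Rightarrow> 'a fract poly poly"
  assumes charp: "CHAR('a) = p" and p_pos: "p > 0"
    and a_nz: "a \<noteq> 0"
    and theta_nz: "\<theta> \<noteq> 0" and theta_y: "coeff \<theta> 0 = 0"
    and f_def: "f = C2 a * Xv + eval1 \<theta> Yv"
    and F_def: "F = eval1 G f" and F_nz: "F \<noteq> 0"
    and phiX_def: "phiX = emb2 Xv + C2 (inverse (to_fract a)) *
          (eval1 (map_poly to_fract \<theta>) (emb2 Yv)
           - eval1 (map_poly to_fract \<theta>) (emb2 (Yv + C2 a * F)))"
    and phi_def: "phi = (\<lambda>u. subst2 u phiX (emb2 (Yv + C2 a * F)))"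
    and d_dvd_a: "[:d:] dvd [:a:]" and d_dvd_theta': "[:d:] dvd pderiv \<theta>"
    and d_gcd: "\<forall>e. e dvd [:a:] \<and> e dvd pderiv \<theta> \<longrightarrow> e dvd [:d:]"
    and q_def: "q = Yv ^ p - (C2 a * F) ^ (p - 1) * Yv"
    and q1_def: "q1 = C2 (inverse (to_fract d)) *
          (emb2 f - eval1 (map_poly to_fract (theta_star p \<theta>)) (emb2 q))"
begin

abbreviation "a' \<equiv> to_fract a"
abbreviation "d' \<equiv> to_fract d"
abbreviation "\<theta>K \<equiv> map_poly to_fract \<theta>"
abbreviation "GK \<equiv> map_poly to_fract G"
abbreviation "tsK \<equiv> map_poly to_fract (theta_star p \<theta>)"
abbreviation "fK \<equiv> emb2 f"
abbreviation "FK \<equiv> emb2 F"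
abbreviation "QK \<equiv> emb2 q"
definition "b = a div d"

lemma prime_p: "prime p"
  using prime_CHAR_semidom[where 'a='a] charp p_pos by simp

lemma p2: "p \<ge> 2" using prime_p prime_ge_2_nat by blast

lemma ofnat_p: "of_nat p = (0::'a)" using charp of_nat_CHAR[where 'a='a] by simp

lemma ofnat_dvd: "of_nat n = (0::'a) \<Longrightarrow> p dvd n"
  using charp of_nat_eq_0_iff_char_dvd[where 'a='a] by simp

lemma of_nat_to_fract: "(of_nat n :: 'a fract) = to_fract (of_nat n)"
  by (simp add: of_nat_fract to_fract_def)

lemma ofnat_p_K: "of_nat p = (0::'b::comm_ring_1 poly)" if "of_nat p = (0::'b)"
  using that by (simp add: of_nat_poly)

lemma ofnat_p_fract: "of_nat p = (0::'a fract)"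
  by (simp add: of_nat_to_fract ofnat_p)

lemma ofnat_dvd_fract_poly: "of_nat n = (0::'a fract poly) \<Longrightarrow> p dvd n"
  by (simp add: of_nat_poly of_nat_to_fract ofnat_dvd)

lemma d_dvd: "d dvd a" using d_dvd_a by (simp add: const_poly_dvd_iff) (metis coeff_pCons_0)

lemma d_nz: "d \<noteq> 0" using d_dvd a_nz by auto

lemma a_eq: "a = d * b" unfolding b_def using d_dvd by simp

lemma b_nz: "b \<noteq> 0" using a_eq a_nz by auto

lemma fK_eq: "fK = C2 a' * Xv + eval1 \<theta>K Yv" by (simp add: f_def)
lemma FK_eq: "FK = eval1 GK fK" by (simp add: F_def)
lemma QK_eq: "QK = Yv ^ p - (C2 a' * FK) ^ (p - 1) * Yv" by (simp add: q_def)

lemma frobK: "(A + B) ^ p = A ^ p + B ^ p" for A B :: "'a fract poly poly"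
  by (rule frob[OF prime_p]) (simp add: ofnat_p_fract of_nat_poly)

lemma phi_hom: "rh phi" unfolding phi_def by (rule rh_subst2)
lemma phi_C2: "phi (C2 c) = C2 c" by (simp add: phi_def)

lemma phi_fK: "phi fK = fK"
proof -
  have ai: "C2 a' * C2 (inverse a') = 1" using a_nz by (simp flip: C2_mult add: C2_1)
  have "phi fK = C2 a' * phiX + eval1 \<theta>K (emb2 (Yv + C2 a * F))"
    by (simp add: phi_def f_def)
  also have "\<dots> = fK" unfolding phiX_def fK_eq
    by (simp add: algebra_simps ai flip: mult.assoc)
  finally show ?thesis .
qed

lemma phi_FK: "phi FK = FK"
  unfolding FK_eq by (simp add: rh_eval1_comm[OF phi_hom phi_C2] phi_fK)

lemma phi_QK: "phi QK = QK"
proof -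
  let ?C = "C2 a' * FK"
  have pY: "phi Yv = Yv + ?C" by (simp add: phi_def)
  have "phi QK = (phi Yv) ^ p - (C2 a' * phi FK) ^ (p - 1) * phi Yv"
    unfolding QK_eq by (simp add: rh_diff[OF phi_hom] rh_mult[OF phi_hom] rh_power[OF phi_hom] phi_C2)
  also have "\<dots> = (Yv + ?C) ^ p - ?C ^ (p - 1) * (Yv + ?C)" unfolding pY phi_FK ..
  also have "\<dots> = Yv ^ p + ?C ^ p - ?C ^ (p - 1) * Yv - ?C ^ (p - 1) * ?C"
    by (simp add: frobK algebra_simps)
  also have "?C ^ (p - 1) * ?C = ?C ^ p" using p2
    by (metis Suc_diff_1 less_le_trans pos2 power_Suc2)
  finally show ?thesis unfolding QK_eq by simp
qed

lemma phi_q1: "phi q1 = q1"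
  unfolding q1_def
  by (simp add: rh_mult[OF phi_hom] rh_diff[OF phi_hom] phi_C2 phi_fK phi_QK rh_eval1_comm[OF phi_hom phi_C2])

lemma supset: "phi (subst2 P q1 QK) = subst2 P q1 QK"
proof -
  have "phi (subst2 P q1 QK) = subst2 P (phi q1) (phi QK)"
    unfolding phi_def by (rule subst2_comp)
  then show ?thesis by (simp add: phi_q1 phi_QK)
qed

end

context thm_setting begin

abbreviation "ia \<equiv> inverse a'"
definition "tau W = subst2 W (C2 ia * (Xv - eval1 \<theta>K Yv)) Yv"
definition "tau' W = subst2 W fK Yv"
definition "Y2 = Yv + C2 a' * eval1 GK Xv"
definition "Tr W = subst2 W Xv Y2"
definition "cc = smult a' GK"

lemma ai1: "C2 a' * C2 ia = 1" using a_nz by (simp flip: C2_mult add: C2_1)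

lemma tau'_tau: "tau' (tau W) = W"
proof -
  have "tau' (tau W) = subst2 W (C2 ia * (fK - eval1 \<theta>K Yv)) Yv"
    unfolding tau_def tau'_def by (simp add: subst2_comp)
  also have "C2 ia * (fK - eval1 \<theta>K Yv) = Xv"
    unfolding fK_eq by (simp add: algebra_simps ai1 flip: mult.assoc)
  finally show ?thesis by (simp add: subst2_id)
qed

lemma tau_fK: "subst2 fK (C2 ia * (Xv - eval1 \<theta>K Yv)) Yv = Xv"
  unfolding fK_eq by (simp add: algebra_simps ai1 flip: mult.assoc)

lemma tau_phi: "tau (phi W) = Tr (tau W)"
proof -
  let ?A = "C2 ia * (Xv - eval1 \<theta>K Yv)"
  have tY': "subst2 (emb2 (Yv + C2 a * F)) ?A Yv = Y2"
    unfolding Y2_def by (simp add: FK_eq tau_fK)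
  have tphiX: "subst2 phiX ?A Yv = C2 ia * (Xv - eval1 \<theta>K Y2)"
  proof -
    have "subst2 phiX ?A Yv = ?A + C2 ia * (eval1 \<theta>K Yv - eval1 \<theta>K (subst2 (emb2 (Yv + C2 a * F)) ?A Yv))"
      unfolding phiX_def by (simp del: emb2_add emb2_mult)
    also have "\<dots> = C2 ia * (Xv - eval1 \<theta>K Y2)" unfolding tY' by (simp add: algebra_simps)
    finally show ?thesis .
  qed
  have "tau (phi W) = subst2 W (C2 ia * (Xv - eval1 \<theta>K Y2)) Y2"
    unfolding tau_def phi_def subst2_comp tphiX tY' ..
  also have "\<dots> = Tr (tau W)"
    unfolding Tr_def tau_def by (simp add: subst2_comp)
  finally show ?thesis .
qed

lemma Y2_eq: "Y2 = [:cc, 1:]"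
  unfolding Y2_def cc_def by (simp add: eval1_Xv C2_def Yv_def)

lemma Tr_pcompose: "Tr W = pcompose W [:cc, 1:]"
  unfolding Tr_def Y2_eq by (rule subst2_Xv_pcompose)

lemma G_nz: "G \<noteq> 0" using F_nz F_def by auto

lemma cc_nz: "cc \<noteq> 0" unfolding cc_def using G_nz a_nz
  by (simp add: map_poly_eq_0_iff)

lemma Sa: "subr (Rloc a)" using a_nz by (rule Rloc_subr)

lemma pinK: "map_poly to_fract g \<in> pin (Rloc a)"
  by (simp add: pin_def coeff_map_poly Rloc_to_fract)

lemma cc_in: "cc \<in> pin (Rloc a)"
  unfolding cc_def using pinK[of "smult a G"] by simp

lemma Q0_eq: "Q0 p cc = Yv ^ p - (C2 a' * eval1 GK Xv) ^ (p - 1) * Yv"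
proof -
  have "C2 a' * eval1 GK Xv = [:cc:]" unfolding cc_def by (simp add: eval1_Xv C2_def)
  moreover have "[:0, cc ^ (p - 1):] = [:cc:] ^ (p - 1) * [:0, 1:]" by (simp add: poly_const_pow)
  ultimately show ?thesis unfolding Q0_def Yv_def by simp
qed

lemma tau'_Q0: "tau' (Q0 p cc) = QK"
  unfolding Q0_eq tau'_def QK_eq FK_eq by simp

lemma fK_q1: "fK = C2 d' * q1 + eval1 tsK QK"
proof -
  have "C2 d' * C2 (inverse d') = 1" using d_nz by (simp flip: C2_mult add: C2_1)
  then show ?thesis unfolding q1_def by (simp flip: mult.assoc)
qed

lemma emb2_in: "emb2 W \<in> pin (pin (Rloc a))"
  using pin_emb2[of W] pin_mono[OF pin_mono[OF range_Rloc[of a]]] by blast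

lemma stepA:
  assumes uR: "u \<in> Rxy" and inv: "phi u = u"
  shows "\<exists>P \<in> pin (pin (Rloc a)). u = subst2 P q1 QK"
proof -
  obtain u0 where u0: "u = emb2 u0" using uR unfolding Rxy_def by blast
  define v where "v = tau u"
  have vinv: "pcompose v [:cc, 1:] = v"
    using tau_phi[of u] inv unfolding v_def Tr_pcompose by simp
  have SS: "subr (pin (Rloc a))" by (rule pin_subr[OF Sa])
  have vin: "v \<in> pin (pin (Rloc a))" unfolding v_def tau_def u0
    by (intro pin_subst2 Sa emb2_in subr_mult[OF pin_subr[OF SS]] subr_diff[OF pin_subr[OF SS]]
        pin_C2 Rloc_inv pin_Xv pin_Yv pin_eval1 pinK)
  have chK: "of_nat p = (0 :: 'a fract poly)" by (simp add: of_nat_poly ofnat_p_fract)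
  obtain w where w: "v = pcompose w (Q0 p cc)" "w \<in> pin (pin (Rloc a))"
    using L1[OF prime_p chK ofnat_dvd_fract_poly cc_nz SS cc_in vinv vin] by blast
  have "u = tau' v" unfolding v_def by (simp add: tau'_tau)
  also have "\<dots> = subst2 w fK QK"
    unfolding w(1) subst2_Xv_pcompose[symmetric] tau'_def subst2_comp
    using tau'_Q0 unfolding tau'_def by simp
  also have "\<dots> = subst2 (subst2 w (C2 d' * Xv + eval1 tsK Yv) Yv) q1 QK"
    unfolding subst2_comp by (simp add: fK_q1)
  finally have "u = subst2 (subst2 w (C2 d' * Xv + eval1 tsK Yv) Yv) q1 QK" .
  moreover have "subst2 w (C2 d' * Xv + eval1 tsK Yv) Yv \<in> pin (pin (Rloc a))"
    by (intro pin_subst2 Sa w(2) subr_add[OF pin_subr[OF SS]] subr_mult[OF pin_subr[OF SS]]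
        pin_C2 Rloc_to_fract pin_Xv pin_Yv pin_eval1 pinK)
  ultimately show ?thesis by blast
qed

end

context thm_setting begin

abbreviation "ts \<equiv> theta_star p \<theta>"

lemma coeff_ts: "coeff ts j = (if j \<in> {1..degree \<theta>} then coeff \<theta> (p * j) else 0)"
  by (simp add: theta_star_def coeff_sum coeff_monom)

lemma d_dvd_coeff: assumes "\<not> p dvd k" shows "d dvd coeff \<theta> k"
proof -
  obtain k' where k: "k = Suc k'" using assms by (cases k) auto
  have "d dvd coeff (pderiv \<theta>) k'" using d_dvd_theta' by (simp add: const_poly_dvd_iff)
  then have h: "d dvd of_nat k * coeff \<theta> k" by (simp add: coeff_pderiv k)
  have "coprime p k" using prime_p assms by (simp add: prime_imp_coprime)
  then have "coprime (int k) (int p)" by (simp add: coprime_commute)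
  then have "gcd (int k) (int p) = 1" by simp
  then obtain u v where "u * int k + v * int p = 1" using bezout_int[of "int k" "int p"] by auto
  then have "of_int (u * int k + v * int p) = (1::'a)" by simp
  then have uk: "of_int u * of_nat k = (1::'a)" using ofnat_p by simp
  have ce: "coeff \<theta> k = of_int u * (of_nat k * coeff \<theta> k)" using uk by (simp flip: mult.assoc)
  have "d dvd of_int u * (of_nat k * coeff \<theta> k)" using h by (rule dvd_mult)
  then show ?thesis using ce by simp
qed

lemma theta_split: "\<exists>\<theta>1. \<theta> = pcompose ts (monom 1 p) + smult d \<theta>1"
proof -
  have "[:d:] dvd \<theta> - pcompose ts (monom 1 p)"
    unfolding const_poly_dvd_iff
  proof
    fix k
    show "d dvd coeff (\<theta> - pcompose ts (monom 1 p)) k"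
    proof (cases "p dvd k")
      case True
      then obtain j where kj: "k = p * j" by blast
      have "coeff (pcompose ts (monom 1 p)) k = coeff ts j"
        using p_pos kj by (simp add: coeff_pcompose_monom)
      moreover have "coeff ts j = coeff \<theta> k"
      proof (cases "j = 0")
        case True then show ?thesis using kj theta_y by (simp add: coeff_ts)
      next
        case False
        show ?thesis
        proof (cases "j \<le> degree \<theta>")
          case True then show ?thesis using False kj by (simp add: coeff_ts)
        next
          case F2: False
          have "j \<le> p * j" using p_pos by simp
          then have "degree \<theta> < k" using F2 kj by linarith
          then show ?thesis using F2 by (simp add: coeff_ts coeff_eq_0)
        qed
      qed
      ultimately show ?thesis by simp
    next
      case False
      then show ?thesis using p_pos d_dvd_coeff[OF False] by (simp add: coeff_pcompose_monom)
    qed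
  qed
  then obtain \<theta>1 where "\<theta> - pcompose ts (monom 1 p) = [:d:] * \<theta>1" by (elim dvdE)
  then show ?thesis by (intro exI[of _ \<theta>1]) (simp add: algebra_simps)
qed

lemma lift_eval1_Yv: "lift g = eval1 g Yv"
  using eval1_lift[of g "[:0,1:]"] by (simp add: lift_Yv)

lemma lift_smult: "lift (smult r g) = C2 r * lift g"
  using rh_mult[OF rh_lift, of "[:r:]" g] by (simp add: lift_C2)

lemma lift_monom: "lift (monom 1 n) = Yv ^ n"
  by (simp add: lift_eval1_Yv eval1_monom1)

lemma fe_alg:
  fixes Ca Cb Cd X E Tp E1 TQ H T1 Z K1 Y :: "'b::comm_ring_1"
  assumes "Ca = Cd * Cb" "E = Tp + Cd * E1" "TQ = Tp + H * T1 + H ^ 2 * Z" "H = - (Cd * K1) * Y"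
  shows "Ca * X + E - TQ = Cd * (Cb * X + E1 + K1 * Y * T1 - Cd * K1 ^ 2 * Y ^ 2 * Z)"
  unfolding assms by (simp add: algebra_simps power2_eq_square)

lemma q10_exists:
  "\<exists>q10 e. emb2 q10 = q1 \<and>
     (\<forall>pi. pi dvd d \<longrightarrow> C2 pi dvd q10 - (C2 b * Xv + lift e) \<and> C2 pi dvd q - lift (monom 1 p))"
proof -
  obtain \<theta>1 where th: "\<theta> = pcompose ts (monom 1 p) + smult d \<theta>1" using theta_split by blast
  define T1 where "T1 = eval1 (pderiv ts) (Yv ^ p)"
  define K1 where "K1 = C2 (b * a ^ (p - 2)) * F ^ (p - 1)"
  define H where "H = - (C2 d * K1) * Yv"
  obtain Z where Z: "eval1 ts (Yv ^ p + H) - eval1 ts (Yv ^ p) - H * T1 = H ^ 2 * Z"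
    using taylor2[of H ts "Yv ^ p"] unfolding T1_def by (elim dvdE) auto
  have ap: "a ^ (p - 1) = d * (b * a ^ (p - 2))"
  proof -
    have "p - 1 = Suc (p - 2)" using p2 by simp
    then have "a ^ (p - 1) = a * a ^ (p - 2)" by simp
    also have "\<dots> = (d * b) * a ^ (p - 2)" using a_eq by (rule arg_cong)
    finally show ?thesis by (simp only: mult.assoc)
  qed
  have cK: "(C2 a * F) ^ (p - 1) = C2 d * K1"
  proof -
    have "(C2 a * F) ^ (p - 1) = C2 (a ^ (p - 1)) * F ^ (p - 1)" by (simp only: power_mult_distrib C2_power)
    also have "\<dots> = C2 d * K1" unfolding K1_def ap C2_mult by (simp only: mult.assoc)
    finally show ?thesis .
  qed
  have qH: "q = Yv ^ p + H" unfolding q_def H_def cK by simp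
  have thY: "eval1 \<theta> Yv = eval1 ts (Yv ^ p) + C2 d * eval1 \<theta>1 Yv"
    by (subst th) (simp add: rh_add[OF rh_eval1] eval1_pcompose eval1_monom1 eval1_C2_mult)
  define q10 where "q10 = C2 b * Xv + eval1 \<theta>1 Yv + K1 * Yv * T1 - C2 d * K1 ^ 2 * Yv ^ 2 * Z"
  have fe: "f - eval1 ts q = C2 d * q10"
  proof -
    have h3: "eval1 ts q = eval1 ts (Yv ^ p) + H * T1 + H ^ 2 * Z" using Z unfolding qH
      by (simp add: algebra_simps)
    have h1: "C2 a = C2 d * C2 b" using a_eq C2_mult by metis
    show ?thesis unfolding f_def q10_def
      by (rule fe_alg[OF h1 thY h3 H_def])
  qed
  have eq1: "emb2 q10 = q1"
  proof -
    have hh: "C2 d' * emb2 q10 = fK - eval1 tsK QK" using arg_cong[OF fe, of emb2] by simp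
    have hi: "C2 (inverse d') * C2 d' = 1" using d_nz by (simp flip: C2_mult add: C2_1)
    have "q1 = C2 (inverse d') * (C2 d' * emb2 q10)" unfolding q1_def hh ..
    also have "\<dots> = emb2 q10" by (simp add: mult.assoc[symmetric] hi)
    finally show ?thesis by simp
  qed
  define F0 where "F0 = eval1 G (eval1 \<theta> Yv)"
  define e where "e = \<theta>1 + smult (b * a ^ (p - 2)) (pcompose G \<theta> ^ (p - 1)) * [:0,1:] * pcompose (pderiv ts) (monom 1 p)"
  have le: "lift e = eval1 \<theta>1 Yv + C2 (b * a ^ (p - 2)) * F0 ^ (p - 1) * Yv * T1"
  proof -
    have "lift e = lift \<theta>1 + C2 (b * a ^ (p - 2)) * lift (pcompose G \<theta>) ^ (p - 1) * lift [:0,1:] * lift (pcompose (pderiv ts) (monom 1 p))"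
      unfolding e_def by (simp only: rh_add[OF rh_lift] rh_mult[OF rh_lift] lift_smult rh_power[OF rh_lift])
    also have "\<dots> = eval1 \<theta>1 Yv + C2 (b * a ^ (p - 2)) * F0 ^ (p - 1) * Yv * T1"
      unfolding F0_def T1_def
      by (simp only: lift_Yv eval1_lift[symmetric] lift_monom lift_eval1_Yv[of \<theta>1] lift_eval1_Yv[of \<theta>])
    finally show ?thesis .
  qed
  have cong: "C2 pi dvd q10 - (C2 b * Xv + lift e) \<and> C2 pi dvd q - lift (monom 1 p)" if pd: "pi dvd d" for pi
  proof -
    have pa: "pi dvd a" using pd d_dvd by (rule dvd_trans)
    obtain t where t: "d = pi * t" using pd by (elim dvdE)
    have pC: "C2 pi dvd C2 d" unfolding t C2_mult by simp
    obtain t' where t': "a = pi * t'" using pa by (elim dvdE)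
    have pCa: "C2 pi dvd C2 a" unfolding t' C2_mult by simp
    have "C2 pi dvd f - eval1 \<theta> Yv" unfolding f_def using pCa by simp
    then have "C2 pi dvd F - F0" unfolding F_def F0_def by (rule eval1_cong)
    then have "C2 pi dvd F ^ (p - 1) - F0 ^ (p - 1)" by (rule dvd_power_diff')
    then have "C2 pi dvd C2 (b * a ^ (p - 2)) * (F ^ (p - 1) - F0 ^ (p - 1))" by (rule dvd_mult)
    then have dK: "C2 pi dvd K1 - C2 (b * a ^ (p - 2)) * F0 ^ (p - 1)"
      unfolding K1_def by (simp add: right_diff_distrib)
    have "q10 - (C2 b * Xv + lift e) = (K1 - C2 (b * a ^ (p - 2)) * F0 ^ (p - 1)) * (Yv * T1) - C2 d * (K1 ^ 2 * Yv ^ 2 * Z)"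
      unfolding q10_def le by (simp add: algebra_simps)
    moreover have "C2 pi dvd (K1 - C2 (b * a ^ (p - 2)) * F0 ^ (p - 1)) * (Yv * T1)" using dK by (rule dvd_mult2)
    moreover have "C2 pi dvd C2 d * (K1 ^ 2 * Yv ^ 2 * Z)" using pC by (rule dvd_mult2)
    ultimately have c1: "C2 pi dvd q10 - (C2 b * Xv + lift e)" by (simp add: dvd_diff)
    have "q - lift (monom 1 p) = C2 d * (- K1 * Yv)" unfolding qH lift_monom H_def by simp
    moreover have "C2 pi dvd C2 d * (- K1 * Yv)" using pC by (rule dvd_mult2)
    ultimately have c2: "C2 pi dvd q - lift (monom 1 p)" by simp
    show ?thesis using c1 c2 by blast
  qed
  show ?thesis using eq1 cong by blast
qed

end

context thm_setting begin

lemma stepB: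
  assumes P: "P \<in> pin (pin (Rloc a))" and uR: "u \<in> Rxy" and eq: "u = subst2 P q1 QK"
  shows "P \<in> pin (pin (Rloc b))"
proof -
  obtain q10 e where q10: "emb2 q10 = q1"
    and cong: "\<And>pi. pi dvd d \<Longrightarrow> C2 pi dvd q10 - (C2 b * Xv + lift e) \<and> C2 pi dvd q - lift (monom 1 p)"
    using q10_exists by blast
  obtain u0 where u0: "u = emb2 u0" using uR unfolding Rxy_def by blast
  obtain N P0 where P0: "P = emb2 P0 * C2 (ia ^ N)" using common_denom[OF a_nz P] by blast
  have "emb2 u0 = emb2 (subst2 P0 q10 q) * C2 (ia ^ N)"
    using eq unfolding u0 P0 by (simp add: emb2_subst2 q10)
  then have "C2 (a' ^ N) * emb2 u0 = (C2 (a' ^ N) * C2 (ia ^ N)) * emb2 (subst2 P0 q10 q)"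
    by (simp add: algebra_simps)
  also have "C2 (a' ^ N) * C2 (ia ^ N) = 1"
    using a_nz by (simp flip: C2_mult power_mult_distrib add: C2_1)
  finally have "emb2 (C2 (a ^ N) * u0) = emb2 (subst2 P0 q10 q)" by simp
  then have key: "C2 (a ^ N) * u0 = subst2 P0 q10 q" by (rule emb2_inj)
  have B1: "C2 pi dvd P1" if pr: "prime pi" and pa: "pi dvd a" and nb: "\<not> pi dvd b"
    and dv: "C2 pi dvd subst2 P1 q10 q" for pi P1
  proof -
    have "pi dvd d * b" using pa by (simp only: a_eq[symmetric])
    then have pd: "pi dvd d" using pr nb by (simp add: prime_elem_dvd_mult_iff prime_imp_prime_elem)
    have c: "C2 pi dvd subst2 P1 q10 q - subst2 P1 (C2 b * Xv + lift e) (lift (monom 1 p))"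
      using cong[OF pd] by (intro subst2_cong) auto
    have "C2 pi dvd subst2 P1 q10 q - (subst2 P1 q10 q - subst2 P1 (C2 b * Xv + lift e) (lift (monom 1 p)))"
      using dv c by (rule dvd_diff)
    then have "C2 pi dvd subst2 P1 (C2 b * Xv + lift e) (lift (monom 1 p))" by simp
    then show ?thesis using pr nb p_pos by (intro B1core[of pi b p P1 e]) (auto simp: prime_imp_prime_elem)
  qed
  have aN: "a ^ N \<noteq> 0" using a_nz by simp
  have aNp: "\<forall>pi. prime pi \<longrightarrow> pi dvd a ^ N \<longrightarrow> pi dvd a"
    using prime_dvd_power by blast
  obtain D2 P2 k where D2: "D2 \<noteq> 0" "D2 dvd b ^ k"
    "emb2 P0 * C2 (inverse (to_fract (a ^ N))) = emb2 P2 * C2 (inverse (to_fract D2))"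
    using descent[of a b q10 q, OF B1 aN aNp key] by blast
  have "P = emb2 P2 * C2 (inverse (to_fract D2))"
    unfolding P0 using D2(3) by (simp add: power_inverse)
  then show ?thesis using final_Rloc[OF b_nz D2(1,2)] by simp
qed

lemma main:
  "{u \<in> Rxy. phi u = u}
       = {subst2 P q1 (emb2 q) | P. \<forall>i j. coeff (coeff P i) j \<in> Rloc (a div d)} \<inter> Rxy"
proof (intro equalityI subsetI)
  fix u assume "u \<in> {u \<in> Rxy. phi u = u}"
  then have uR: "u \<in> Rxy" and inv: "phi u = u" by auto
  obtain P where P: "P \<in> pin (pin (Rloc a))" "u = subst2 P q1 QK" using stepA[OF uR inv] by blast
  have "P \<in> pin (pin (Rloc b))" using stepB[OF P(1) uR P(2)] .
  then have "\<forall>i j. coeff (coeff P i) j \<in> Rloc (a div d)" unfolding b_def by (simp add: pin_def)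
  then show "u \<in> {subst2 P q1 (emb2 q) | P. \<forall>i j. coeff (coeff P i) j \<in> Rloc (a div d)} \<inter> Rxy"
    using P(2) uR by blast
next
  fix u assume "u \<in> {subst2 P q1 (emb2 q) | P. \<forall>i j. coeff (coeff P i) j \<in> Rloc (a div d)} \<inter> Rxy"
  then obtain P where "u = subst2 P q1 QK" "u \<in> Rxy" by blast
  then show "u \<in> {u \<in> Rxy. phi u = u}" using supset[of P] by simp
qed

end

theorem theorem6p4:
  fixes a d :: "'a::factorial_ring_gcd" and \<theta> G :: "'a poly" and p :: nat
    and f F q :: "'a poly poly" and phiX q1 :: "'a fract poly poly"
    and phi :: "'a fract poly poly \<Rightarrow> 'a fract poly poly"
  assumes charp: "CHAR('a) = p" and p_pos: "p > 0"
    and a_nz: "a \<noteq> 0"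
    and theta_nz: "\<theta> \<noteq> 0" and theta_y: "coeff \<theta> 0 = 0"
    and f_def: "f = C2 a * Xv + eval1 \<theta> Yv"
    and F_def: "F = eval1 G f" and F_nz: "F \<noteq> 0"
    and phiX_def: "phiX = emb2 Xv + C2 (inverse (to_fract a)) *
          (eval1 (map_poly to_fract \<theta>) (emb2 Yv)
           - eval1 (map_poly to_fract \<theta>) (emb2 (Yv + C2 a * F)))"
    and phi_def: "phi = (\<lambda>u. subst2 u phiX (emb2 (Yv + C2 a * F)))"
    and d_dvd_a: "[:d:] dvd [:a:]" and d_dvd_theta': "[:d:] dvd pderiv \<theta>"
    and d_gcd: "\<forall>e. e dvd [:a:] \<and> e dvd pderiv \<theta> \<longrightarrow> e dvd [:d:]"
    and q_def: "q = Yv ^ p - (C2 a * F) ^ (p - 1) * Yv"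
    and q1_def: "q1 = C2 (inverse (to_fract d)) *
          (emb2 f - eval1 (map_poly to_fract (theta_star p \<theta>)) (emb2 q))"
  shows "{u \<in> Rxy. phi u = u}
       = {subst2 P q1 (emb2 q) | P. \<forall>i j. coeff (coeff P i) j \<in> Rloc (a div d)} \<inter> Rxy"
proof -
  interpret thm_setting a d \<theta> G p f F q phiX q1 phi
    by (unfold_locales; fact assms)
  show ?thesis by (rule main)
qed

end
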